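(* Let $G$ be a tree, let $P$ and $T$ be valid search trees on $G$. Then every node $v$ of $T$ is a transition point (with respect to $T$) of at most one node $y$ of $P$.
   Context: Search tree on a tree: a rooted tree $T$ is a valid search tree on an unrooted tree $G$ if the root $r$ of $T$ is a vertex of $G$ and the subtrees of $T\setminus r$ are valid search trees on the connected components of $G\setminus r$. For a node $y$ of $P$, $P(y)$ denotes the subtree of $P$ rooted at $y$ (and its vertex set). Transition points: let $y$ be a non-leaf node of $P$ with children $y_1,\dots,y_d$, and regard $y$ itself as belonging to the part $P(y_1)$ (i.e. the parts are $\{y\}\cup P(y_1), P(y_2),\dots,P(y_d)$). For $i=1,\dots,d$ let $\ell_i$ be the node of the $i$-th part having smallest depth in $T$. Let $\ell_{i^*}$ be the one of smallest depth in $T$ among $\ell_1,\dots,\ell_d$ (it is the lowest common ancestor in $T$ of all nodes of $P(y)$), called the dominating node of $P(y)$ in $T$. For each $i\neq i^*$, the node $\ell_i$ is called the transition point of $y$ for $P(y_i)$. *)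

theory Defs
  imports Main
begin

definition reach_in :: "('a \<Rightarrow> 'a \<Rightarrow> bool) \<Rightarrow> 'a set \<Rightarrow> 'a \<Rightarrow> 'a \<Rightarrow> bool" where
  "reach_in E S = (\<lambda>a b. E a b \<and> a \<in> S \<and> b \<in> S)\<^sup>*\<^sup>*"

definition comps :: "('a \<Rightarrow> 'a \<Rightarrow> bool) \<Rightarrow> 'a set \<Rightarrow> 'a set set" where
  "comps E S = {{y \<in> S. reach_in E S x y} | x. x \<in> S}"

definition is_tree :: "'a set \<Rightarrow> ('a \<Rightarrow> 'a \<Rightarrow> bool) \<Rightarrow> bool" where
  "is_tree V E \<longleftrightarrow> finite V \<and> V \<noteq> {}
     \<and> (\<forall>x y. E x y \<longrightarrow> x \<in> V \<and> y \<in> V \<and> x \<noteq> y \<and> E y x)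
     \<and> (\<forall>x\<in>V. \<forall>y\<in>V. reach_in E V x y)
     \<and> \<not> (\<exists>cs. length cs \<ge> 3 \<and> distinct cs \<and> set cs \<subseteq> V
              \<and> (\<forall>i. Suc i < length cs \<longrightarrow> E (cs ! i) (cs ! Suc i))
              \<and> E (last cs) (hd cs))"

datatype 'a rtree = Node (root: 'a) (kids: "'a rtree list")

fun vs :: "'a rtree \<Rightarrow> 'a set" where
  "vs (Node r ts) = insert r (\<Union>t\<in>set ts. vs t)"

fun subtrees :: "'a rtree \<Rightarrow> 'a rtree set" where
  "subtrees (Node r ts) = insert (Node r ts) (\<Union>t\<in>set ts. subtrees t)"

inductive search_tree :: "('a \<Rightarrow> 'a \<Rightarrow> bool) \<Rightarrow> 'a set \<Rightarrow> 'a rtree \<Rightarrow> bool"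
  for E where
  "\<lbrakk> r \<in> S; distinct (map vs ts); set (map vs ts) = comps E (S - {r});
     \<forall>t\<in>set ts. search_tree E (vs t) t \<rbrakk> \<Longrightarrow> search_tree E S (Node r ts)"

inductive at_depth :: "'a rtree \<Rightarrow> 'a \<Rightarrow> nat \<Rightarrow> bool" where
  "at_depth (Node r ts) r 0"
| "\<lbrakk> t \<in> set ts; at_depth t v n \<rbrakk> \<Longrightarrow> at_depth (Node r ts) v (Suc n)"

definition depth :: "'a rtree \<Rightarrow> 'a \<Rightarrow> nat" where
  "depth T v = (LEAST n. at_depth T v n)"

definition lowest :: "'a rtree \<Rightarrow> 'a set \<Rightarrow> 'a \<Rightarrow> bool" where
  "lowest T A v \<longleftrightarrow> v \<in> A \<and> (\<forall>w\<in>A. depth T v \<le> depth T w)"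

fun parts :: "'a rtree \<Rightarrow> 'a set list" where
  "parts (Node y []) = []"
| "parts (Node y (c # cs)) = insert y (vs c) # map vs cs"

text \<open>v is a transition point (w.r.t. T) of the node y of P: v is the
smallest-depth node l_i of some part i, and i is not the dominating index,
i.e. some other part's smallest-depth node l_j is strictly shallower.\<close>
definition transition_point :: "'a rtree \<Rightarrow> 'a rtree \<Rightarrow> 'a \<Rightarrow> 'a \<Rightarrow> bool" where
  "transition_point T P y v \<longleftrightarrow>
     (\<exists>c\<in>subtrees P. root c = y \<and> kids c \<noteq> [] \<and>
        (\<exists>i<length (parts c). lowest T (parts c ! i) v \<and>
           (\<exists>j<length (parts c). \<exists>w. lowest T (parts c ! j) w \<and> depth T w < depth T v)))"

end

theory Submission
  imports Defs
begin

fun wf :: "'a rtree \<Rightarrow> bool" where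
  "wf (Node r ts) \<longleftrightarrow> (\<forall>t\<in>set ts. r \<notin> vs t)
     \<and> (\<forall>i<length ts. \<forall>j<length ts. i \<noteq> j \<longrightarrow> vs (ts!i) \<inter> vs (ts!j) = {})
     \<and> (\<forall>t\<in>set ts. wf t)"

lemma rtranclp_sym: "R\<^sup>*\<^sup>* a b \<Longrightarrow> symp R \<Longrightarrow> R\<^sup>*\<^sup>* b a"
  by (induction rule: rtranclp.induct) (auto dest: sympD intro: converse_rtranclp_into_rtranclp)

lemma reach_sym:
  assumes "\<forall>x y. E x y \<longrightarrow> E y x" "reach_in E S a b" shows "reach_in E S b a"
proof -
  have "symp (\<lambda>a b. E a b \<and> a \<in> S \<and> b \<in> S)" using assms(1) by (auto intro: sympI)
  thus ?thesis using assms(2) unfolding reach_in_def using rtranclp_sym by metis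
qed

lemma comps_disj:
  assumes "\<forall>x y. E x y \<longrightarrow> E y x" "A \<in> comps E S" "B \<in> comps E S" "A \<noteq> B"
  shows "A \<inter> B = {}"
proof (rule ccontr)
  assume "A \<inter> B \<noteq> {}"
  then obtain z where z: "z \<in> A" "z \<in> B" by blast
  obtain x where x: "x \<in> S" "A = {y \<in> S. reach_in E S x y}" using assms(2) unfolding comps_def by blast
  obtain y where y: "y \<in> S" "B = {u \<in> S. reach_in E S y u}" using assms(3) unfolding comps_def by blast
  have xz: "reach_in E S x z" and yz: "reach_in E S y z" using z x y by auto
  have zy: "reach_in E S z y" using reach_sym[OF assms(1) yz] .
  have xy: "reach_in E S x y" using xz zy unfolding reach_in_def by (rule rtranclp_trans)
  have yx: "reach_in E S y x" using reach_sym[OF assms(1) xy] .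
  have "A = B"
  proof
    show "A \<subseteq> B" using x y yx unfolding reach_in_def by (auto intro: rtranclp_trans)
    show "B \<subseteq> A" using x y xy unfolding reach_in_def by (auto intro: rtranclp_trans)
  qed
  with assms(4) show False by simp
qed

lemma search_wf:
  assumes "search_tree E S t" "\<forall>x y. E x y \<longrightarrow> E y x"
  shows "wf t"
  using assms(1)
proof induction
  case (1 r S ts)
  have c1: "\<forall>t\<in>set ts. r \<notin> vs t"
  proof
    fix t assume "t \<in> set ts"
    then have "vs t \<in> comps E (S - {r})" using 1(3) by auto
    then show "r \<notin> vs t" unfolding comps_def by auto
  qed
  have c2: "\<forall>i<length ts. \<forall>j<length ts. i \<noteq> j \<longrightarrow> vs (ts!i) \<inter> vs (ts!j) = {}"
  proof (intro allI impI)
    fix i j assume ij: "i < length ts" "j < length ts" "i \<noteq> j"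
    have "vs (ts!i) \<noteq> vs (ts!j)" using 1(2) ij
      by (metis length_map nth_eq_iff_index_eq nth_map)
    moreover have "vs (ts!i) \<in> comps E (S - {r})" "vs (ts!j) \<in> comps E (S - {r})"
      using 1(3) ij by (metis list.set_map image_eqI nth_mem)+
    ultimately show "vs (ts!i) \<inter> vs (ts!j) = {}" using comps_disj[OF assms(2)] by blast
  qed
  show ?case using c1 c2 1(4) by auto
qed

lemma subtrees_vs: "c \<in> subtrees t \<Longrightarrow> vs c \<subseteq> vs t"
  by (induction t rule: subtrees.induct) auto

lemma subtrees_wf: "wf t \<Longrightarrow> c \<in> subtrees t \<Longrightarrow> wf c"
  by (induction t rule: subtrees.induct) auto

lemma subtrees_trans: "c \<in> subtrees t \<Longrightarrow> t \<in> subtrees u \<Longrightarrow> c \<in> subtrees u"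
  by (induction u rule: subtrees.induct) auto

lemma subtrees_self: "t \<in> subtrees t"
  by (cases t) auto

lemma nested:
  "wf P \<Longrightarrow> c1 \<in> subtrees P \<Longrightarrow> c2 \<in> subtrees P \<Longrightarrow> v \<in> vs c1 \<Longrightarrow> v \<in> vs c2
   \<Longrightarrow> c1 \<in> subtrees c2 \<or> c2 \<in> subtrees c1"
proof (induction P arbitrary: c1 c2 rule: subtrees.induct)
  case (1 r ts)
  show ?case
  proof (cases "c1 = Node r ts \<or> c2 = Node r ts")
    case True then show ?thesis using 1 by auto
  next
    case False
    then obtain t1 t2 where t: "t1 \<in> set ts" "t2 \<in> set ts" "c1 \<in> subtrees t1" "c2 \<in> subtrees t2"
      using 1 by auto
    have "v \<in> vs t1" "v \<in> vs t2" using t subtrees_vs 1 by blast+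
    moreover obtain i j where "i < length ts" "t1 = ts!i" "j < length ts" "t2 = ts!j"
      using t(1,2) by (metis in_set_conv_nth)
    moreover have "\<forall>i<length ts. \<forall>j<length ts. i \<noteq> j \<longrightarrow> vs (ts!i) \<inter> vs (ts!j) = {}"
      using 1(2) by simp
    ultimately have "t1 = t2" by blast
    then show ?thesis using 1 t by auto
  qed
qed

lemma parts_len: "length (parts (Node y ts)) = length ts"
  by (cases ts) auto

lemma parts_nth: "i < length ts \<Longrightarrow> vs (ts!i) \<subseteq> parts (Node y ts) ! i \<and> parts (Node y ts) ! i \<subseteq> insert y (vs (ts!i))"
  by (cases ts; cases i) auto

lemma parts_sub: "i < length (parts c) \<Longrightarrow> parts c ! i \<subseteq> vs c"
proof (cases c)
  case (Node y ts)
  assume "i < length (parts c)"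
  then have il: "i < length ts" using Node parts_len by metis
  then have "ts!i \<in> set ts" by simp
  then have "vs (ts!i) \<subseteq> vs c" using Node by auto
  moreover have "y \<in> vs c" using Node by simp
  ultimately show ?thesis using parts_nth[OF il, of y] Node by blast
qed

lemma inside_part:
  assumes "wf c2" "c1 \<in> subtrees c2" "c1 \<noteq> c2" "v \<in> vs c1" "i < length (parts c2)" "v \<in> parts c2 ! i"
  shows "vs c1 \<subseteq> parts c2 ! i"
proof (cases c2)
  case (Node y ts)
  then obtain m where m: "m < length ts" "c1 \<in> subtrees (ts!m)" using assms(2,3)
    by (auto simp: in_set_conv_nth)
  have il: "i < length ts" using assms(5) Node parts_len by metis
  have sub: "vs c1 \<subseteq> vs (ts!m)" using subtrees_vs m by blast
  have "y \<notin> vs (ts!m)" using assms(1) Node m(1) by auto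
  then have "v \<noteq> y" using sub assms(4) by blast
  then have "v \<in> vs (ts!i)" using parts_nth[OF il, of y] assms(6) Node by auto
  moreover have "v \<in> vs (ts!m)" using sub assms(4) by blast
  ultimately have "i = m" using assms(1) Node m(1) il by auto
  then show ?thesis using sub parts_nth[OF il, of y] Node by auto
qed

lemma half:
  assumes "wf P" "c1 \<in> subtrees P" "c2 \<in> subtrees P" "c1 \<in> subtrees c2" "c1 \<noteq> c2"
    and "i1 < length (parts c1)" "lowest T (parts c1 ! i1) v"
    and "j < length (parts c1)" "lowest T (parts c1 ! j) w" "depth T w < depth T v"
    and "i2 < length (parts c2)" "lowest T (parts c2 ! i2) v"
  shows False
proof -
  have wf2: "wf c2" using subtrees_wf assms(1,3) by blast
  have "v \<in> vs c1" using assms(6,7) parts_sub unfolding lowest_def by blast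
  moreover have "v \<in> parts c2 ! i2" using assms(12) unfolding lowest_def by blast
  ultimately have "vs c1 \<subseteq> parts c2 ! i2" using inside_part[OF wf2 assms(4,5)] assms(11) by blast
  moreover have "w \<in> vs c1" using assms(8,9) parts_sub unfolding lowest_def by blast
  ultimately have "depth T v \<le> depth T w" using assms(12) unfolding lowest_def by blast
  with assms(10) show False by simp
qed

theorem mainTheorem2:
  fixes V :: "'a set" and E :: "'a \<Rightarrow> 'a \<Rightarrow> bool" and P T :: "'a rtree"
  assumes "is_tree V E"
    and "search_tree E V P"
    and "search_tree E V T"
    and "v \<in> vs T"
  shows "\<forall>y1 y2. transition_point T P y1 v \<and> transition_point T P y2 v \<longrightarrow> y1 = y2"
proof (intro allI impI)
  fix y1 y2 assume h: "transition_point T P y1 v \<and> transition_point T P y2 v"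
  have wfP: "wf P" using search_wf[OF assms(2)] assms(1) unfolding is_tree_def by blast
  obtain c1 i1 j1 w1 where c1: "c1 \<in> subtrees P" "root c1 = y1" "i1 < length (parts c1)"
      "lowest T (parts c1 ! i1) v" "j1 < length (parts c1)" "lowest T (parts c1 ! j1) w1"
      "depth T w1 < depth T v"
    using h unfolding transition_point_def by blast
  obtain c2 i2 j2 w2 where c2: "c2 \<in> subtrees P" "root c2 = y2" "i2 < length (parts c2)"
      "lowest T (parts c2 ! i2) v" "j2 < length (parts c2)" "lowest T (parts c2 ! j2) w2"
      "depth T w2 < depth T v"
    using h unfolding transition_point_def by blast
  show "y1 = y2"
  proof (rule ccontr)
    assume ne: "y1 \<noteq> y2"
    then have "c1 \<noteq> c2" using c1(2) c2(2) by auto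
    have "v \<in> vs c1" using c1(3,4) parts_sub unfolding lowest_def by blast
    moreover have "v \<in> vs c2" using c2(3,4) parts_sub unfolding lowest_def by blast
    ultimately have "c1 \<in> subtrees c2 \<or> c2 \<in> subtrees c1" by (rule nested[OF wfP c1(1) c2(1)])
    then show False
    proof
      assume "c1 \<in> subtrees c2"
      then show False by (rule half[OF wfP c1(1) c2(1) _ \<open>c1 \<noteq> c2\<close> c1(3,4,5,6,7) c2(3,4)])
    next
      assume "c2 \<in> subtrees c1"
      moreover have "c2 \<noteq> c1" using \<open>c1 \<noteq> c2\<close> by simp
      ultimately show False by (rule half[OF wfP c2(1) c1(1) _ _ c2(3,4,5,6,7) c1(3,4)])
    qed
  qed
qed

end
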